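(* Let $D$ be an E-simple integral domain with maximal subfield $K$. Suppose $f,g\in D\setminus K$ are not algebraically independent over $K$. Then $\mathfrak p_f=\mathfrak p_g$. In particular, if $g\in K[f]\setminus K$, then $\mathfrak p_f=\mathfrak p_g$.
   Context: For an integral domain $D$ with fraction field $F$, the reciprocal complement $R(D)$ is the subring of $F$ generated by all $1/d$, $d\in D\setminus\{0\}$. An element $d\in D$ is Egyptian if $d\in R(D)$. $D$ is E-simple if every Egyptian element of $D$ is a unit; then the Egyptian elements together with $0$ form a subfield $K$ of $D$, the maximal subfield. For nonzero $f\in D$, $\mathfrak p_f$ denotes the unique prime ideal of $R(D)$ maximal with respect to not containing $1/f$. *)

theory Defs
  imports "HOL-Computational_Algebra.Fraction_Field"
begin

definition emb :: "'a::idom \<Rightarrow> 'a fract" where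
  "emb d = Fract d 1"

inductive_set recip_compl :: "'a::idom fract set" where
  unit_frac: "d \<noteq> 0 \<Longrightarrow> inverse (emb d) \<in> recip_compl"
| zero: "0 \<in> recip_compl"
| one: "1 \<in> recip_compl"
| add: "x \<in> recip_compl \<Longrightarrow> y \<in> recip_compl \<Longrightarrow> x + y \<in> recip_compl"
| neg: "x \<in> recip_compl \<Longrightarrow> - x \<in> recip_compl"
| mult: "x \<in> recip_compl \<Longrightarrow> y \<in> recip_compl \<Longrightarrow> x * y \<in> recip_compl"

definition egyptian :: "'a::idom \<Rightarrow> bool" where
  "egyptian d \<longleftrightarrow> d \<noteq> 0 \<and> emb d \<in> recip_compl"

definition E_simple :: "'a::idom itself \<Rightarrow> bool" where
  "E_simple _ \<longleftrightarrow> (\<forall>d::'a. egyptian d \<longrightarrow> d dvd 1)"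

definition max_subfield :: "'a::idom set" where
  "max_subfield = {d. egyptian d} \<union> {0}"

definition prime_ideal_R :: "'a::idom fract set \<Rightarrow> bool" where
  "prime_ideal_R P \<longleftrightarrow>
     P \<subseteq> recip_compl \<and> 0 \<in> P \<and>
     (\<forall>x\<in>P. \<forall>y\<in>P. x + y \<in> P) \<and>
     (\<forall>r\<in>recip_compl. \<forall>x\<in>P. r * x \<in> P) \<and>
     P \<noteq> recip_compl \<and>
     (\<forall>x\<in>recip_compl. \<forall>y\<in>recip_compl. x * y \<in> P \<longrightarrow> x \<in> P \<or> y \<in> P)"

definition p_ideal :: "'a::idom \<Rightarrow> 'a fract set" where
  "p_ideal f = (THE P. prime_ideal_R P \<and> inverse (emb f) \<notin> P \<and>
      (\<forall>Q. prime_ideal_R Q \<and> inverse (emb f) \<notin> Q \<and> P \<subseteq> Q \<longrightarrow> Q = P))"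

definition alg_dep_over :: "'a::idom set \<Rightarrow> 'a \<Rightarrow> 'a \<Rightarrow> bool" where
  "alg_dep_over K f g \<longleftrightarrow>
     (\<exists>(N::nat) (c::nat \<Rightarrow> nat \<Rightarrow> 'a).
        (\<forall>i j. c i j \<in> K) \<and> (\<exists>i\<le>N. \<exists>j\<le>N. c i j \<noteq> 0) \<and>
        (\<Sum>i\<le>N. \<Sum>j\<le>N. c i j * f ^ i * g ^ j) = 0)"

definition in_poly_ring :: "'a::idom set \<Rightarrow> 'a \<Rightarrow> 'a \<Rightarrow> bool" where
  "in_poly_ring K f g \<longleftrightarrow>
     (\<exists>(n::nat) (c::nat \<Rightarrow> 'a). (\<forall>i. c i \<in> K) \<and> g = (\<Sum>i\<le>n. c i * f ^ i))"

end

theory Submission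
  imports Defs
begin

lemma emb_add: "emb (a + b) = emb a + emb b"
  by (simp add: emb_def)
lemma emb_mult: "emb (a * b) = emb a * emb b"
  by (simp add: emb_def)
lemma emb_0: "emb 0 = 0"
  by (simp add: emb_def Zero_fract_def)
lemma emb_1: "emb 1 = 1"
  by (simp add: emb_def One_fract_def)
lemma emb_neg: "emb (- a) = - emb a"
  by (simp add: emb_def)
lemma emb_eq0: "emb a = 0 \<longleftrightarrow> a = 0"
  by (simp add: emb_def Zero_fract_def eq_fract)
lemma emb_pow: "emb (a ^ n) = emb a ^ n"
  by (induction n) (simp_all add: emb_1 emb_mult)
lemma emb_sum: "emb (sum h A) = (\<Sum>x\<in>A. emb (h x))"
  by (induction A rule: infinite_finite_induct) (simp_all add: emb_0 emb_add)

lemma R_sum: "(\<And>x. x \<in> A \<Longrightarrow> h x \<in> recip_compl) \<Longrightarrow> sum h A \<in> recip_compl"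
  by (induction A rule: infinite_finite_induct) (simp_all add: recip_compl.zero recip_compl.add)
lemma R_pow: "x \<in> recip_compl \<Longrightarrow> x ^ n \<in> recip_compl"
  by (induction n) (simp_all add: recip_compl.one recip_compl.mult)

lemma inv_R: "d \<noteq> 0 \<Longrightarrow> inverse (emb d) \<in> recip_compl"
  by (rule recip_compl.unit_frac)

lemma unit_in_K:
  assumes "(u::'a::idom) dvd 1" shows "u \<in> max_subfield"
proof -
  obtain v where v: "1 = u * v" using assms by (auto elim: dvdE)
  have "emb v * emb u = emb (v * u)" by (simp add: emb_mult)
  also have "\<dots> = 1" using v by (simp add: mult.commute emb_1)
  finally have "emb v * emb u = 1" .
  hence "inverse (emb v) = emb u" by (rule inverse_unique)
  moreover have "v \<noteq> 0" using v by auto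
  ultimately have "emb u \<in> recip_compl" using inv_R by metis
  moreover have "u \<noteq> 0" using v by auto
  ultimately show ?thesis by (simp add: max_subfield_def egyptian_def)
qed

lemma K_unit:
  assumes "E_simple TYPE('a)" "(c::'a::idom) \<in> max_subfield" "c \<noteq> 0" shows "c dvd 1"
  using assms by (auto simp: max_subfield_def E_simple_def)

lemma K_R: "(c::'a::idom) \<in> max_subfield \<Longrightarrow> emb c \<in> recip_compl"
  by (auto simp: max_subfield_def egyptian_def emb_0 recip_compl.zero)

lemma poly_zero:
  assumes ES: "E_simple TYPE('a)" and g: "(g::'a::idom) \<notin> max_subfield"
  shows "(\<forall>j. c j \<in> max_subfield) \<Longrightarrow> (\<Sum>j\<le>N. c j * g ^ j) = 0 \<Longrightarrow> \<forall>j\<le>N. c j = 0"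
proof (induction N arbitrary: c)
  case 0
  then show ?case by simp
next
  case (Suc N)
  have g0: "g \<noteq> 0" using g by (auto simp: max_subfield_def)
  have "(\<Sum>j\<le>Suc N. c j * g ^ j) = c 0 + g * (\<Sum>j\<le>N. c (Suc j) * g ^ j)"
    by (subst sum.atMost_Suc_shift) (simp add: sum_distrib_left mult.left_commute del: sum.atMost_Suc)
  hence eq: "c 0 + g * (\<Sum>j\<le>N. c (Suc j) * g ^ j) = 0"
    using Suc.prems(2) by simp
  have c0: "c 0 = 0"
  proof (rule ccontr)
    assume "c 0 \<noteq> 0"
    hence "c 0 dvd 1" using K_unit[OF ES] Suc.prems(1) by blast
    moreover have "g dvd c 0"
    proof -
      have "c 0 = g * (- (\<Sum>j\<le>N. c (Suc j) * g ^ j))" using eq by (simp add: add_eq_0_iff)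
      thus ?thesis by (metis dvd_triv_left)
    qed
    ultimately have "g dvd 1" by (rule dvd_trans[rotated])
    thus False using unit_in_K g by blast
  qed
  hence "(\<Sum>j\<le>N. c (Suc j) * g ^ j) = 0" using eq g0 by simp
  hence "\<forall>j\<le>N. c (Suc j) = 0" using Suc.IH[of "\<lambda>j. c (Suc j)"] Suc.prems(1) by blast
  then show ?case using c0 by (metis le0 not0_implies_Suc Suc_le_mono)
qed

context
  fixes P :: "'a::idom fract set"
  assumes PP: "prime_ideal_R P"
begin

lemma P_R: "x \<in> P \<Longrightarrow> x \<in> recip_compl"
  using PP by (auto simp: prime_ideal_R_def)
lemma P_0: "0 \<in> P"
  using PP by (auto simp: prime_ideal_R_def)
lemma P_add: "x \<in> P \<Longrightarrow> y \<in> P \<Longrightarrow> x + y \<in> P"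
  using PP by (auto simp: prime_ideal_R_def)
lemma P_mult: "r \<in> recip_compl \<Longrightarrow> x \<in> P \<Longrightarrow> r * x \<in> P"
  using PP by (auto simp: prime_ideal_R_def)
lemma P_neg: "x \<in> P \<Longrightarrow> - x \<in> P"
proof -
  assume "x \<in> P"
  moreover have "- 1 \<in> recip_compl" by (rule recip_compl.neg[OF recip_compl.one])
  ultimately have "(- 1) * x \<in> P" by (rule P_mult[rotated])
  thus ?thesis by simp
qed
lemma P_sum: "(\<And>x. x \<in> A \<Longrightarrow> h x \<in> P) \<Longrightarrow> sum h A \<in> P"
  by (induction A rule: infinite_finite_induct) (simp_all add: P_0 P_add)
lemma P_pow: "x \<in> recip_compl \<Longrightarrow> x ^ n \<in> P \<Longrightarrow> x \<in> P"
proof (induction n)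
  case 0
  have "\<forall>r\<in>recip_compl. r \<in> P"
  proof
    fix r :: "'a fract" assume "r \<in> recip_compl"
    from P_mult[OF this, of 1] 0 show "r \<in> P" by simp
  qed
  hence "P = recip_compl" using P_R by blast
  thus ?case using PP by (simp add: prime_ideal_R_def)
next
  case (Suc n)
  have "x * x ^ n \<in> P" using Suc.prems by simp
  moreover have "x ^ n \<in> recip_compl" using R_pow Suc.prems by blast
  ultimately have "x \<in> P \<or> x ^ n \<in> P" using PP Suc.prems(1) by (simp add: prime_ideal_R_def)
  thus ?case using Suc by blast
qed

lemma core:
  fixes f g :: 'a
  assumes ES: "E_simple TYPE('a)" and fK: "f \<notin> max_subfield" and gK: "g \<notin> max_subfield"
    and dep: "alg_dep_over max_subfield f g" and tP: "inverse (emb f) \<in> P"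
  shows "inverse (emb g) \<in> P"
proof -
  obtain N c where cK: "\<forall>i j. c i j \<in> max_subfield" and nz: "\<exists>i\<le>N. \<exists>j\<le>N. c i j \<noteq> 0"
    and rel: "(\<Sum>i\<le>N. \<Sum>j\<le>N. c i j * f ^ i * g ^ j) = 0"
    using dep unfolding alg_dep_over_def by blast
  define A where "A i = (\<Sum>j\<le>N. c i j * g ^ j)" for i
  have Anz: "\<exists>i\<le>N. A i \<noteq> 0"
  proof -
    obtain i j where ij: "i \<le> N" "j \<le> N" "c i j \<noteq> 0" using nz by blast
    have "A i \<noteq> 0"
    proof
      assume "A i = 0"
      hence "\<forall>j\<le>N. c i j = 0" using poly_zero[OF ES gK, of "c i" N] cK unfolding A_def by blast
      thus False using ij by blast
    qed
    thus ?thesis using ij by blast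
  qed
  define I where "I = {i. i \<le> N \<and> A i \<noteq> 0}"
  have finI: "finite I" unfolding I_def by simp
  have neI: "I \<noteq> {}" using Anz unfolding I_def by blast
  define i0 where "i0 = Max I"
  have "i0 \<in> I" unfolding i0_def using finI neI by (rule Max_in)
  hence i0N: "i0 \<le> N" and Ai0: "A i0 \<noteq> 0" unfolding I_def by auto
  have above: "A i = 0" if "i0 < i" "i \<le> N" for i
  proof (rule ccontr)
    assume "A i \<noteq> 0"
    hence "i \<in> I" using that unfolding I_def by blast
    hence "i \<le> i0" unfolding i0_def using finI by simp
    thus False using that by simp
  qed
  have "(\<Sum>i\<le>N. A i * f ^ i) = (\<Sum>i\<le>N. \<Sum>j\<le>N. c i j * f ^ i * g ^ j)"
    unfolding A_def sum_distrib_right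
    by (rule sum.cong[OF refl], rule sum.cong[OF refl]) (simp add: ac_simps)
  hence rel2: "(\<Sum>i\<le>N. A i * f ^ i) = 0" using rel by simp
  have "(\<Sum>i\<le>i0. A i * f ^ i) = (\<Sum>i\<le>N. A i * f ^ i)"
    by (rule sum.mono_neutral_left) (use i0N above in auto)
  hence rel3: "(\<Sum>i\<le>i0. A i * f ^ i) = 0" using rel2 by simp
  have f0: "f \<noteq> 0" and g0: "g \<noteq> 0" using fK gK by (auto simp: max_subfield_def)
  hence ef: "emb f \<noteq> 0" and eg: "emb g \<noteq> 0" by (auto simp: emb_eq0)
  define t where "t = inverse (emb f)"
  define s where "s = inverse (emb g)"
  have tR: "t \<in> recip_compl" unfolding t_def using f0 by (rule inv_R)
  have sR: "s \<in> recip_compl" unfolding s_def using g0 by (rule inv_R)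
  define B where "B i = s ^ N * emb (A i)" for i
  have sg: "s ^ N * emb g ^ j = s ^ (N - j)" if "j \<le> N" for j
  proof -
    have "s ^ N = s ^ (N - j) * s ^ j" using that by (simp flip: power_add)
    moreover have "s ^ j * emb g ^ j = 1" using eg by (simp add: s_def flip: power_mult_distrib)
    ultimately show ?thesis by (simp add: mult.assoc)
  qed
  have hB: "B i = (\<Sum>j\<le>N. emb (c i j) * s ^ (N - j))" for i
  proof -
    have "B i = (\<Sum>j\<le>N. emb (c i j) * (s ^ N * emb g ^ j))"
      unfolding B_def A_def emb_sum sum_distrib_left by (rule sum.cong[OF refl]) (simp add: emb_mult emb_pow ac_simps)
    also have "\<dots> = (\<Sum>j\<le>N. emb (c i j) * s ^ (N - j))"
      by (rule sum.cong[OF refl]) (simp add: sg)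
    finally show ?thesis .
  qed
  have BR: "B i \<in> recip_compl" for i
    unfolding hB by (rule R_sum, rule recip_compl.mult) (use K_R cK R_pow sR in auto)
  have tf: "t ^ i0 * emb f ^ i = t ^ (i0 - i)" if "i \<le> i0" for i
  proof -
    have "t ^ i0 = t ^ (i0 - i) * t ^ i" using that by (simp flip: power_add)
    moreover have "t ^ i * emb f ^ i = 1" using ef by (simp add: t_def flip: power_mult_distrib)
    ultimately show ?thesis by (simp add: mult.assoc)
  qed
  have "(\<Sum>i\<le>i0. B i * t ^ (i0 - i)) = (\<Sum>i\<le>i0. s ^ N * t ^ i0 * (emb (A i) * emb f ^ i))"
  proof (rule sum.cong[OF refl])
    fix i assume "i \<in> {..i0}"
    hence "i \<le> i0" by simp
    have "s ^ N * t ^ i0 * (emb (A i) * emb f ^ i) = s ^ N * emb (A i) * (t ^ i0 * emb f ^ i)"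
      by (simp add: ac_simps)
    also have "\<dots> = B i * t ^ (i0 - i)" using tf[OF \<open>i \<le> i0\<close>] by (simp add: B_def)
    finally show "B i * t ^ (i0 - i) = s ^ N * t ^ i0 * (emb (A i) * emb f ^ i)" by simp
  qed
  also have "\<dots> = s ^ N * t ^ i0 * emb (\<Sum>i\<le>i0. A i * f ^ i)"
    by (simp add: emb_sum emb_mult emb_pow sum_distrib_left)
  also have "\<dots> = 0" using rel3 by (simp add: emb_0)
  finally have rel4: "(\<Sum>i\<le>i0. B i * t ^ (i0 - i)) = 0" .
  have "{..i0} = insert i0 {..<i0}" by auto
  hence "B i0 + (\<Sum>i<i0. B i * t ^ (i0 - i)) = 0" using rel4 by simp
  hence Bi0: "B i0 = - (\<Sum>i<i0. B i * t ^ (i0 - i))" by (simp add: eq_neg_iff_add_eq_0)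
  have "(\<Sum>i<i0. B i * t ^ (i0 - i)) \<in> P"
  proof (rule P_sum)
    fix i assume "i \<in> {..<i0}"
    hence "i0 - i = Suc (i0 - i - 1)" by simp
    hence eqt: "B i * t ^ (i0 - i) = (B i * t ^ (i0 - i - 1)) * t" by (simp add: ac_simps)
    moreover have "B i * t ^ (i0 - i - 1) \<in> recip_compl" using BR R_pow tR by (blast intro: recip_compl.mult)
    hence "(B i * t ^ (i0 - i - 1)) * t \<in> P"
      using P_mult tP t_def by simp
    thus "B i * t ^ (i0 - i) \<in> P" by (subst eqt)
  qed
  hence "B i0 \<in> P" using Bi0 P_neg by simp
  moreover have "inverse (emb (A i0)) \<in> recip_compl" using Ai0 by (rule inv_R)
  ultimately have "inverse (emb (A i0)) * B i0 \<in> P" by (rule P_mult[rotated])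
  moreover have "inverse (emb (A i0)) * B i0 = s ^ N" using Ai0 by (simp add: B_def emb_eq0)
  ultimately have "s ^ N \<in> P" by simp
  thus ?thesis using P_pow sR s_def by blast
qed

end

lemma p_eq:
  assumes "\<And>P. prime_ideal_R P \<Longrightarrow> (inverse (emb f) \<in> P \<longleftrightarrow> inverse (emb g) \<in> P)"
  shows "p_ideal f = p_ideal g"
proof -
  have "(\<lambda>P. prime_ideal_R P \<and> inverse (emb f) \<notin> P \<and>
      (\<forall>Q. prime_ideal_R Q \<and> inverse (emb f) \<notin> Q \<and> P \<subseteq> Q \<longrightarrow> Q = P)) =
    (\<lambda>P. prime_ideal_R P \<and> inverse (emb g) \<notin> P \<and>
      (\<forall>Q. prime_ideal_R Q \<and> inverse (emb g) \<notin> Q \<and> P \<subseteq> Q \<longrightarrow> Q = P))"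
    using assms by blast
  thus ?thesis unfolding p_ideal_def by simp
qed

lemma dep_sym:
  assumes "alg_dep_over K f g" shows "alg_dep_over K g f"
proof -
  obtain N c where cK: "\<forall>i j. c i j \<in> K" and nz: "\<exists>i\<le>N. \<exists>j\<le>N. c i j \<noteq> 0"
    and rel: "(\<Sum>i\<le>N. \<Sum>j\<le>N. c i j * f ^ i * g ^ j) = 0"
    using assms unfolding alg_dep_over_def by blast
  have "(\<Sum>i\<le>N. \<Sum>j\<le>N. c j i * g ^ i * f ^ j) = (\<Sum>j\<le>N. \<Sum>i\<le>N. c j i * g ^ i * f ^ j)"
    by (rule sum.swap)
  also have "\<dots> = (\<Sum>j\<le>N. \<Sum>i\<le>N. c j i * f ^ j * g ^ i)"
    by (intro sum.cong refl) (simp only: mult.assoc mult.commute[of "g ^ _"])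
  finally have "(\<Sum>i\<le>N. \<Sum>j\<le>N. c j i * g ^ i * f ^ j) = 0" using rel by simp
  moreover have "\<exists>i\<le>N. \<exists>j\<le>N. c j i \<noteq> 0" using nz by blast
  moreover have "\<forall>i j. c j i \<in> K" using cK by blast
  ultimately show ?thesis unfolding alg_dep_over_def
    by (intro exI[of _ N] exI[of _ "\<lambda>i j. c j i"]) simp
qed

lemma poly_dep:
  assumes "in_poly_ring max_subfield f (g::'a::idom)"
  shows "alg_dep_over max_subfield f g"
proof -
  obtain n c where cK: "\<forall>i. c i \<in> max_subfield" and g: "g = (\<Sum>i\<le>n. c i * f ^ i)"
    using assms unfolding in_poly_ring_def by blast
  define d where "d (i::nat) (j::nat) = (if j = 0 then (if i \<le> n then c i else 0) else if j = 1 \<and> i = 0 then -1 else (0::'a))" for i j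
  have m1: "(-1::'a) \<in> max_subfield" by (rule unit_in_K) simp
  have z: "(0::'a) \<in> max_subfield" by (simp add: max_subfield_def)
  have dK: "\<forall>i j. d i j \<in> max_subfield" unfolding d_def using cK m1 z by auto
  have inner: "(\<Sum>j\<le>Suc n. d i j * f ^ i * g ^ j) =
      (if i \<le> n then c i * f ^ i else 0) + (if i = 0 then - g else 0)" for i
  proof -
    have "(\<Sum>j\<le>Suc n. d i j * f ^ i * g ^ j) =
      (\<Sum>j\<le>Suc n. (if j = 0 then (if i \<le> n then c i * f ^ i else 0) else 0)
         + (if j = 1 then (if i = 0 then - g else 0) else 0))"
      by (rule sum.cong[OF refl]) (auto simp: d_def)
    also have "\<dots> = (if i \<le> n then c i * f ^ i else 0) + (if i = 0 then - g else 0)"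
      by (simp add: sum.distrib)
    finally show ?thesis .
  qed
  have "(\<Sum>i\<le>Suc n. \<Sum>j\<le>Suc n. d i j * f ^ i * g ^ j) =
      (\<Sum>i\<le>Suc n. (if i \<le> n then c i * f ^ i else 0)) + (\<Sum>i\<le>Suc n. (if i = 0 then - g else 0))"
    by (simp only: inner sum.distrib)
  also have "(\<Sum>i\<le>Suc n. (if i \<le> n then c i * f ^ i else 0)) = (\<Sum>i\<le>n. c i * f ^ i)"
    by simp
  also have "(\<Sum>i\<le>Suc n. (if i = 0 then - g else 0)) = - g"
    by simp
  finally have "(\<Sum>i\<le>Suc n. \<Sum>j\<le>Suc n. d i j * f ^ i * g ^ j) = 0" using g by simp
  moreover have "d 0 1 \<noteq> 0" by (simp add: d_def)
  ultimately show ?thesis unfolding alg_dep_over_def using dK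
    by (intro exI[of _ "Suc n"] exI[of _ d]) auto
qed

theorem mainTheorem7:
  fixes f g :: "'a::idom"
  assumes "E_simple TYPE('a)"
    and "f \<notin> max_subfield"
  shows "(g \<notin> max_subfield \<and> alg_dep_over max_subfield f g \<longrightarrow> p_ideal f = p_ideal g)
     \<and> (in_poly_ring max_subfield f g \<and> g \<notin> max_subfield \<longrightarrow> p_ideal f = p_ideal g)"
proof -
  have A: "p_ideal f = p_ideal g" if gK: "g \<notin> max_subfield" and dep: "alg_dep_over max_subfield f g"
  proof (rule p_eq)
    fix P :: "'a fract set" assume PP: "prime_ideal_R P"
    show "inverse (emb f) \<in> P \<longleftrightarrow> inverse (emb g) \<in> P"
      using core[OF PP assms(1) assms(2) gK dep] core[OF PP assms(1) gK assms(2) dep_sym[OF dep]]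
      by blast
  qed
  show ?thesis using A poly_dep by blast
qed

end
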